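(* Let $S=\mathbb{Q}[x,y]/\langle x^3+xy^2+y^3\rangle$, and let $A_1=\mathbb{Q}[x^2,xy]$ and $A_2=\mathbb{Q}[x,y^2]$ be the subalgebras of $S$ generated by the images of the indicated polynomials. Then $$A_1\cap A_2=\mathbb{Q}[\,x^2,\; x^2y^2+xy^3,\; y^4,\; xy^3,\; y^6,\; xy^5\,]\subseteq S,$$ and these six elements form a subalgebra basis of $A_1\cap A_2$ with respect to the graded reverse lexicographic order with $x>y$.
   Context: For an ideal $I$ of a polynomial ring $R$ with monomial order $<$ and a subalgebra $A\subseteq R/I$, the initial algebra $\operatorname{in}_<(A)$ is the subalgebra of $R/\operatorname{in}_<(I)$ generated by the initial terms (taken with respect to normal forms modulo $I$) of elements of $A$; a set $\{g_j\}\subseteq A$ is a subalgebra basis of $A$ if $\operatorname{in}_<(A)$ is generated by the initial terms of the $g_j$. Here $\operatorname{in}_<(I)=\langle x^3\rangle$. *)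

theory Defs
  imports "HOL-Computational_Algebra.Polynomial"
begin

text \<open>Q[x,y] is represented as Q[y][x], i.e. the type rat poly poly:
  the outer polynomial variable is x, the inner one is y.
  The coefficient of the monomial x^a y^b in p is coeff (coeff p a) b.\<close>

type_synonym qpoly = "rat poly poly"

definition Xv :: qpoly where "Xv = [:0, 1:]"
definition Yv :: qpoly where "Yv = [:[:0, 1:]:]"

definition mcoeff :: "qpoly \<Rightarrow> nat \<times> nat \<Rightarrow> rat" where
  "mcoeff p m = coeff (coeff p (fst m)) (snd m)"

definition fS :: qpoly where "fS = Xv ^ 3 + Xv * Yv ^ 2 + Yv ^ 3"

inductive_set alg_gen :: "qpoly set \<Rightarrow> qpoly set" for G :: "qpoly set" where
  const: "[:[:c:]:] \<in> alg_gen G"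
| gen: "g \<in> G \<Longrightarrow> g \<in> alg_gen G"
| add: "p \<in> alg_gen G \<Longrightarrow> q \<in> alg_gen G \<Longrightarrow> p + q \<in> alg_gen G"
| mult: "p \<in> alg_gen G \<Longrightarrow> q \<in> alg_gen G \<Longrightarrow> p * q \<in> alg_gen G"

definition in_subalg_S :: "qpoly set \<Rightarrow> qpoly \<Rightarrow> bool" where
  "in_subalg_S G h \<longleftrightarrow> (\<exists>p\<in>alg_gen G. fS dvd (h - p))"

definition grevlex_less :: "nat \<times> nat \<Rightarrow> nat \<times> nat \<Rightarrow> bool" where
  "grevlex_less m n \<longleftrightarrow>
     fst m + snd m < fst n + snd n \<or>
     (fst m + snd m = fst n + snd n \<and> snd m > snd n)"

text \<open>Monomials in the initial ideal in(I) = <x^3> (as given in the context).\<close>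
definition in_inI :: "nat \<times> nat \<Rightarrow> bool" where
  "in_inI m \<longleftrightarrow> fst m \<ge> 3"

definition nf :: "qpoly \<Rightarrow> qpoly" where
  "nf h = (THE r. fS dvd (h - r) \<and> (\<forall>m. mcoeff r m \<noteq> 0 \<longrightarrow> \<not> in_inI m))"

definition lead_mon :: "qpoly \<Rightarrow> nat \<times> nat" where
  "lead_mon p = (THE m. mcoeff p m \<noteq> 0 \<and>
       (\<forall>m'. mcoeff p m' \<noteq> 0 \<longrightarrow> m' = m \<or> grevlex_less m' m))"

definition lead_term :: "qpoly \<Rightarrow> qpoly" where
  "lead_term p = (if p = 0 then 0 else
     monom (monom (mcoeff p (lead_mon p)) (snd (lead_mon p))) (fst (lead_mon p)))"

definition init_term :: "qpoly \<Rightarrow> qpoly" where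
  "init_term h = lead_term (nf h)"

text \<open>The class of h in R/in(I) = Q[x,y]/<x^3> lies in the subalgebra
  generated by the images of T.\<close>
definition in_subalg_R0 :: "qpoly set \<Rightarrow> qpoly \<Rightarrow> bool" where
  "in_subalg_R0 T h \<longleftrightarrow> (\<exists>p\<in>alg_gen T. Xv ^ 3 dvd (h - p))"

end

theory Submission imports Defs begin

definition mon :: "nat \<Rightarrow> nat \<Rightarrow> rat \<Rightarrow> qpoly" where
  "mon a b c = monom (monom c b) a"

lemma mcoeff_mon: "mcoeff (mon a b c) m = (if m = (a,b) then c else 0)"
  by (cases m) (auto simp: mcoeff_def mon_def coeff_monom)

lemma mcoeff_add[simp]: "mcoeff (p + q) m = mcoeff p m + mcoeff q m"
  by (simp add: mcoeff_def)
lemma mcoeff_diff[simp]: "mcoeff (p - q) m = mcoeff p m - mcoeff q m"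
  by (simp add: mcoeff_def)
lemma mcoeff_minus[simp]: "mcoeff (- p) m = - mcoeff p m"
  by (simp add: mcoeff_def)
lemma mcoeff_0[simp]: "mcoeff 0 m = 0"
  by (simp add: mcoeff_def)

lemma mcoeff_eq_iff: "p = q \<longleftrightarrow> (\<forall>m. mcoeff p m = mcoeff q m)"
  by (auto simp: mcoeff_def poly_eq_iff)

lemma x_monom: "[:0, 1:] = monom (1::'a::comm_semiring_1) 1"
  by (simp add: monom_Suc monom_0)

lemma XY_mon: "Xv ^ a * Yv ^ b = mon a b 1"
proof -
  have y: "Yv = monom (monom 1 1) 0" by (simp add: Yv_def monom_0 monom_Suc)
  have "Yv ^ b = monom (monom 1 b) 0" by (simp add: y monom_power)
  moreover have "Xv ^ a = monom 1 a" by (simp add: Xv_def x_monom monom_power)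
  ultimately show ?thesis by (simp add: mon_def mult_monom)
qed

lemma mon_mult: "mon a b c * mon a' b' c' = mon (a+a') (b+b') (c*c')"
  by (simp add: mon_def mult_monom)

lemma const_mon: "[:[:c:]:] = mon 0 0 c"
  by (simp add: mon_def monom_0)

lemma mon_eq: "mon a b c = [:[:c:]:] * (Xv ^ a * Yv ^ b)"
  by (simp add: XY_mon const_mon mon_mult)

lemma mcoeff_mult: "mcoeff (p * q) (a, b) =
   (\<Sum>i\<le>a. \<Sum>j\<le>b. mcoeff p (i,j) * mcoeff q (a-i, b-j))"
  by (simp add: mcoeff_def coeff_mult coeff_sum)

lemma fS_mon: "fS = mon 3 0 1 + mon 1 2 1 + mon 0 3 1"
  by (simp add: fS_def flip: XY_mon)

lemma mcoeff_fS: "mcoeff fS m = (if m = (3,0) \<or> m = (1,2) \<or> m = (0,3) then 1 else 0)"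
  by (auto simp: fS_mon mcoeff_mon)


subsection \<open>Sign involution\<close>

definition sig :: "qpoly \<Rightarrow> qpoly" where
  "sig p = pcompose (map_poly (\<lambda>c. pcompose c [:0,-1:]) p) [:0,-1:]"

lemma neg1_pow_poly: "(-1::rat poly) ^ n = [:(-1) ^ n:]"
  by (induct n) simp_all

lemma mcoeff_sig: "mcoeff (sig p) (a,b) = (-1)^(a+b) * mcoeff p (a,b)"
  by (simp add: mcoeff_def sig_def coeff_pcompose_linear coeff_map_poly neg1_pow_poly power_add)

lemma mcoeff_sig': "mcoeff (sig p) m = (-1)^(fst m + snd m) * mcoeff p m"
  by (cases m) (simp add: mcoeff_sig)

lemma sig_add: "sig (p + q) = sig p + sig q"
  by (simp add: mcoeff_eq_iff mcoeff_sig' algebra_simps)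
lemma sig_diff: "sig (p - q) = sig p - sig q"
  by (simp add: mcoeff_eq_iff mcoeff_sig' algebra_simps)

lemma sig_mult: "sig (p * q) = sig p * sig q"
proof -
  have "mcoeff (sig (p * q)) (a,b) = mcoeff (sig p * sig q) (a,b)" for a b
  proof -
    have "mcoeff (sig (p * q)) (a,b) = (\<Sum>i\<le>a. \<Sum>j\<le>b. (-1)^(a+b) * (mcoeff p (i,j) * mcoeff q (a-i, b-j)))"
      by (simp add: mcoeff_sig mcoeff_mult sum_distrib_left)
    also have "\<dots> = (\<Sum>i\<le>a. \<Sum>j\<le>b. ((-1)^(i+j) * mcoeff p (i,j)) * ((-1)^((a-i)+(b-j)) * mcoeff q (a-i, b-j)))"
    proof (intro sum.cong refl)
      fix i j assume "i \<in> {..a}" "j \<in> {..b}"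
      then have "a + b = (i + j) + ((a-i)+(b-j))" by auto
      then show "(-1::rat)^(a+b) * (mcoeff p (i,j) * mcoeff q (a-i, b-j)) =
        ((-1)^(i+j) * mcoeff p (i,j)) * ((-1)^((a-i)+(b-j)) * mcoeff q (a-i, b-j))"
        by (simp only: power_add) (simp add: algebra_simps)
    qed
    also have "\<dots> = mcoeff (sig p * sig q) (a,b)"
      by (simp add: mcoeff_sig mcoeff_mult)
    finally show ?thesis .
  qed
  then show ?thesis by (auto simp: mcoeff_eq_iff)
qed

lemma sig_mon: "sig (mon a b c) = mon a b ((-1)^(a+b) * c)"
  by (auto simp: mcoeff_eq_iff mcoeff_sig' mcoeff_mon)

lemma sig_fS: "sig fS = - fS"
  by (auto simp: mcoeff_eq_iff mcoeff_sig' mcoeff_fS)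

lemma sig_even_coeff: "sig p = p \<Longrightarrow> odd (a + b) \<Longrightarrow> mcoeff p (a,b) = 0"
  using mcoeff_sig[of p a b] by simp

lemma mcoeff_02: "mcoeff (p * q) (0,2) = mcoeff p (0,0) * mcoeff q (0,2) + mcoeff p (0,1) * mcoeff q (0,1) + mcoeff p (0,2) * mcoeff q (0,0)"
  by (simp add: mcoeff_mult numeral_2_eq_2 atMost_Suc)
lemma mcoeff_01: "mcoeff (p * q) (0,1) = mcoeff p (0,0) * mcoeff q (0,1) + mcoeff p (0,1) * mcoeff q (0,0)"
  by (simp add: mcoeff_mult atMost_Suc)
lemma mcoeff_11: "mcoeff (p * q) (1,1) = mcoeff p (0,0) * mcoeff q (1,1) + mcoeff p (0,1) * mcoeff q (1,0)
   + mcoeff p (1,0) * mcoeff q (0,1) + mcoeff p (1,1) * mcoeff q (0,0)"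
  by (simp add: mcoeff_mult atMost_Suc)

lemma fS_dvd_low: assumes "fS dvd g" "a + b < 3" shows "mcoeff g (a,b) = 0"
proof -
  obtain k where g: "g = fS * k" using assms(1) by (auto elim: dvdE)
  show ?thesis unfolding g mcoeff_mult
    using assms(2) by (auto simp: mcoeff_fS intro!: sum.neutral)
qed

definition rs :: "qpoly \<Rightarrow> qpoly set \<Rightarrow> qpoly \<Rightarrow> bool" where
  "rs m G h \<longleftrightarrow> (\<exists>p\<in>alg_gen G. m dvd (h - p))"

lemma in_subalg_S_rs: "in_subalg_S G = rs fS G"
  by (auto simp: fun_eq_iff in_subalg_S_def rs_def)
lemma in_subalg_R0_rs: "in_subalg_R0 G = rs (Xv ^ 3) G"
  by (auto simp: fun_eq_iff in_subalg_R0_def rs_def)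

lemma rs_gen: "g \<in> G \<Longrightarrow> rs m G g"
  unfolding rs_def by (rule bexI[of _ g]) (auto intro: alg_gen.gen)
lemma rs_const: "rs m G [:[:c:]:]"
  unfolding rs_def by (rule bexI[of _ "[:[:c:]:]"]) (auto intro: alg_gen.const)
lemma rs_zero: "rs m G 0"
  using rs_const[of m G 0] by simp
lemma rs_dvd: "m dvd h \<Longrightarrow> rs m G h"
  unfolding rs_def by (rule bexI[of _ 0]) (auto intro: alg_gen.const[of 0, simplified])
lemma rs_add: "rs m G h1 \<Longrightarrow> rs m G h2 \<Longrightarrow> rs m G (h1 + h2)"
  unfolding rs_def
proof (elim bexE)
  fix p1 p2 assume "p1 \<in> alg_gen G" "m dvd h1 - p1" "p2 \<in> alg_gen G" "m dvd h2 - p2"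
  then show "\<exists>p\<in>alg_gen G. m dvd h1 + h2 - p"
  proof (intro bexI[of _ "p1 + p2"])
    have e: "h1 + h2 - (p1 + p2) = (h1 - p1) + (h2 - p2)" by simp
    show "m dvd h1 + h2 - (p1 + p2)" unfolding e using \<open>m dvd h1 - p1\<close> \<open>m dvd h2 - p2\<close> by (rule dvd_add)
  qed (auto intro: alg_gen.add)
qed
lemma rs_mult: "rs m G h1 \<Longrightarrow> rs m G h2 \<Longrightarrow> rs m G (h1 * h2)"
  unfolding rs_def
proof (elim bexE)
  fix p1 p2 assume a: "p1 \<in> alg_gen G" "m dvd h1 - p1" "p2 \<in> alg_gen G" "m dvd h2 - p2"
  have e: "h1 * h2 - p1 * p2 = (h1 - p1) * h2 + p1 * (h2 - p2)" by (simp add: algebra_simps)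
  show "\<exists>p\<in>alg_gen G. m dvd h1 * h2 - p"
    by (intro bexI[of _ "p1 * p2"]) (use a in \<open>auto intro: alg_gen.mult simp: e\<close>)
qed
lemma rs_smult: "rs m G h \<Longrightarrow> rs m G ([:[:c:]:] * h)"
  by (rule rs_mult[OF rs_const])
lemma rs_neg: "rs m G h \<Longrightarrow> rs m G (- h)"
proof -
  have e: "[:[:-1:]:] = (-1::qpoly)" by (simp add: poly_eq_iff coeff_pCons split: nat.split)
  assume "rs m G h" then show ?thesis using rs_smult[of m G h "-1"] by (simp only: e) simp
qed
lemma rs_diff: "rs m G h1 \<Longrightarrow> rs m G h2 \<Longrightarrow> rs m G (h1 - h2)"
  using rs_add[of m G h1 "-h2"] rs_neg by auto
lemma rs_trans: "m dvd (h - h') \<Longrightarrow> rs m G h' \<Longrightarrow> rs m G h"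
  unfolding rs_def
proof (elim bexE)
  fix p assume "p \<in> alg_gen G" "m dvd h' - p" "m dvd h - h'"
  then show "\<exists>p\<in>alg_gen G. m dvd h - p"
    by (intro bexI[of _ p]) (auto dest: dvd_add[of m "h - h'" "h' - p"])
qed
lemma rs_sum: "(\<And>x. x \<in> A \<Longrightarrow> rs m G (f x)) \<Longrightarrow> rs m G (sum f A)"
  by (induct A rule: infinite_finite_induct) (auto intro: rs_zero rs_add)

lemma alg_gen_mono: "p \<in> alg_gen G \<Longrightarrow> G \<subseteq> H \<Longrightarrow> p \<in> alg_gen H"
  by (induct p rule: alg_gen.induct) (auto intro: alg_gen.intros)

lemma alg_gen_sub: assumes "p \<in> alg_gen G" "\<And>g. g \<in> G \<Longrightarrow> rs m H g" shows "rs m H p"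
  using assms by (induct p rule: alg_gen.induct) (auto intro: rs_const rs_add rs_mult)


subsection \<open>Even monomials\<close>

lemma mono_even:
  assumes mult: "\<And>p q. P p \<Longrightarrow> P q \<Longrightarrow> P (p * q)"
    and h20: "P (mon 2 0 1)" and h31: "P (mon 3 1 1)" and h22: "P (mon 2 2 1)"
    and h13: "P (mon 1 3 1)" and h04: "P (mon 0 4 1)" and h15: "P (mon 1 5 1)"
    and h06: "P (mon 0 6 1)"
  shows "even (a + b) \<Longrightarrow> 4 \<le> a + b \<Longrightarrow> P (mon a b 1)"
proof (induction "a + b" arbitrary: a b rule: less_induct)
  case less
  have mm: "mon a b 1 = mon a' b' 1 * mon a'' b'' 1" if "a = a' + a''" "b = b' + b''" for a' b' a'' b''
    using that by (simp add: mon_mult)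
  consider "a + b = 4" | "a + b = 6 \<and> a \<le> 1" | "a \<ge> 2 \<and> a + b \<ge> 6" | "a \<le> 1 \<and> a + b \<ge> 8"
  proof -
    obtain k where "a + b = 2 * k" using less.prems(1) by (metis evenE)
    then show "(a + b = 4 \<Longrightarrow> thesis) \<Longrightarrow> (a + b = 6 \<and> a \<le> 1 \<Longrightarrow> thesis) \<Longrightarrow>
      (a \<ge> 2 \<and> a + b \<ge> 6 \<Longrightarrow> thesis) \<Longrightarrow> (a \<le> 1 \<and> a + b \<ge> 8 \<Longrightarrow> thesis) \<Longrightarrow> thesis"
    proof -
      have "a + b = 4 \<or> (a + b = 6 \<and> a \<le> 1) \<or> (a \<ge> 2 \<and> a + b \<ge> 6) \<or> (a \<le> 1 \<and> a + b \<ge> 8)"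
        using less.prems(2) \<open>a + b = 2 * k\<close> by presburger
      then show "(a + b = 4 \<Longrightarrow> thesis) \<Longrightarrow> (a + b = 6 \<and> a \<le> 1 \<Longrightarrow> thesis) \<Longrightarrow>
      (a \<ge> 2 \<and> a + b \<ge> 6 \<Longrightarrow> thesis) \<Longrightarrow> (a \<le> 1 \<and> a + b \<ge> 8 \<Longrightarrow> thesis) \<Longrightarrow> thesis"
        by blast
    qed
  qed
  then show ?case
  proof cases
    case 1
    then have "(a = 0 \<and> b = 4) \<or> (a = 1 \<and> b = 3) \<or> (a = 2 \<and> b = 2) \<or> (a = 3 \<and> b = 1) \<or> (a = 4 \<and> b = 0)"
      by presburger
    then consider "a = 0 \<and> b = 4" | "a = 1 \<and> b = 3" | "a = 2 \<and> b = 2" | "a = 3 \<and> b = 1" | "a = 4 \<and> b = 0"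
      by blast
    then show ?thesis
    proof cases
      case 5 then show ?thesis using mult[OF h20 h20] by (simp add: mon_mult)
    qed (use h04 h13 h22 h31 in auto)
  next
    case 2
    then have "(a = 0 \<and> b = 6) \<or> (a = 1 \<and> b = 5)" by presburger
    then consider "a = 0 \<and> b = 6" | "a = 1 \<and> b = 5" by blast
    then show ?thesis by cases (use h06 h15 in auto)
  next
    case 3
    have "P (mon (a-2) b 1)" using less.hyps[of "a-2" b] 3 less.prems by auto
    then show ?thesis using mm[of 2 "a-2" 0 b] mult[OF h20] 3 by auto
  next
    case 4
    then have "a = 0 \<or> a = 1" by presburger
    then consider "a = 0" | "a = 1" by blast
    then show ?thesis
    proof cases
      case 1
      have "P (mon 0 (b-4) 1)" using less.hyps[of 0 "b-4"] 4 1 less.prems by auto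
      then show ?thesis using mm[of 0 0 4 "b-4"] mult[OF h04] 4 1 by auto
    next
      case 2
      have "P (mon 0 (b-3) 1)" using less.hyps[of 0 "b-3"] 4 2 less.prems by auto
      then show ?thesis using mm[of 1 0 3 "b-3"] mult[OF h13] 4 2 by auto
    qed
  qed
qed

lemma poly_decomp: "p = (\<Sum>a\<le>degree p. \<Sum>b\<le>degree (coeff p a). mon a b (mcoeff p (a,b)))"
proof -
  have "p = (\<Sum>a\<le>degree p. monom (coeff p a) a)" by (simp add: poly_as_sum_of_monoms)
  also have "\<dots> = (\<Sum>a\<le>degree p. monom (\<Sum>b\<le>degree (coeff p a). monom (coeff (coeff p a) b) b) a)"
    by (simp add: poly_as_sum_of_monoms)
  also have "\<dots> = (\<Sum>a\<le>degree p. \<Sum>b\<le>degree (coeff p a). mon a b (mcoeff p (a,b)))"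
    by (simp add: monom_sum mon_def mcoeff_def)
  finally show ?thesis .
qed

lemma rs_decomp:
  assumes "\<And>a b. mcoeff p (a,b) \<noteq> 0 \<Longrightarrow> rs m G (mon a b (mcoeff p (a,b)))"
  shows "rs m G p"
  apply (subst poly_decomp[of p])
  apply (intro rs_sum)
  subgoal for a b
    using assms[of a b] by (cases "mcoeff p (a,b) = 0") (auto simp: mon_def intro: rs_zero)
  done

subsection \<open>Normal forms\<close>

lemma xdeg2_iff: "(\<forall>m. mcoeff r m \<noteq> 0 \<longrightarrow> \<not> in_inI m) \<longleftrightarrow> degree r \<le> 2"
proof
  assume a: "\<forall>m. mcoeff r m \<noteq> 0 \<longrightarrow> \<not> in_inI m"
  show "degree r \<le> 2"
  proof (rule degree_le, intro allI impI)
    fix i :: nat assume "2 < i"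
    then have "\<forall>b. coeff (coeff r i) b = 0" using a by (auto simp: mcoeff_def in_inI_def)
    then show "coeff r i = 0" by (simp add: poly_eq_iff)
  qed
next
  assume "degree r \<le> 2"
  then show "\<forall>m. mcoeff r m \<noteq> 0 \<longrightarrow> \<not> in_inI m"
    by (auto simp: mcoeff_def in_inI_def coeff_eq_0)
qed

lemma coeff_fS_3: "coeff fS 3 = 1"
  using mcoeff_fS[of "(3, _)"] by (auto simp: poly_eq_iff mcoeff_def coeff_1)

lemma degree_fS: "degree fS = 3"
proof (rule antisym)
  show "degree fS \<le> 3"
  proof (rule degree_le, intro allI impI)
    fix i :: nat assume "3 < i"
    then show "coeff fS i = 0" using mcoeff_fS[of "(i, _)"] by (auto simp: poly_eq_iff mcoeff_def)
  qed
  show "3 \<le> degree fS" using coeff_fS_3 by (intro le_degree) simp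
qed

lemma fS_nz: "fS \<noteq> 0" using degree_fS by auto

lemma nf_unique: assumes "fS dvd (r1 - r2)" "degree r1 \<le> 2" "degree r2 \<le> 2" shows "r1 = r2"
proof (rule ccontr)
  assume ne: "r1 \<noteq> r2"
  obtain k where k: "r1 - r2 = fS * k" using assms(1) by (auto elim: dvdE)
  with ne have "k \<noteq> 0" by auto
  then have "degree (r1 - r2) \<ge> 3" using k degree_mult_eq[OF fS_nz, of k] degree_fS by simp
  moreover have "degree (r1 - r2) \<le> 2" using assms by (intro degree_diff_le)
  ultimately show False by simp
qed

lemma nf_exists: "\<exists>r. fS dvd (h - r) \<and> degree r \<le> 2"
proof -
  obtain q r where qr: "pseudo_divmod h fS = (q, r)" by (cases "pseudo_divmod h fS") auto
  from pseudo_divmod[OF fS_nz qr] have "h = fS * q + r" "r = 0 \<or> degree r < 3"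
    by (simp_all add: degree_fS coeff_fS_3)
  then show ?thesis by (intro exI[of _ r]) auto
qed

lemma nf_eq: assumes "fS dvd (h - r)" "degree r \<le> 2" shows "nf h = r"
  unfolding nf_def xdeg2_iff
proof (rule the_equality)
  show "fS dvd h - r \<and> degree r \<le> 2" using assms by simp
  fix r' assume "fS dvd h - r' \<and> degree r' \<le> 2"
  then show "r' = r" using assms
    by (intro nf_unique) (auto dest: dvd_diff[of fS "h - r" "h - r'"])
qed

lemma nf_props: "fS dvd (h - nf h) \<and> degree (nf h) \<le> 2"
proof -
  obtain r where "fS dvd (h - r)" "degree r \<le> 2" using nf_exists by blast
  with nf_eq show ?thesis by auto
qed


lemma grevlex_asym: "grevlex_less m n \<Longrightarrow> grevlex_less n m \<Longrightarrow> False"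
  by (auto simp: grevlex_less_def)

lemma lead_mon_eq:
  assumes "mcoeff p m \<noteq> 0" "\<forall>m'. mcoeff p m' \<noteq> 0 \<longrightarrow> m' = m \<or> grevlex_less m' m"
  shows "lead_mon p = m"
  unfolding lead_mon_def
proof (rule the_equality)
  show "mcoeff p m \<noteq> 0 \<and> (\<forall>m'. mcoeff p m' \<noteq> 0 \<longrightarrow> m' = m \<or> grevlex_less m' m)" using assms by blast
  fix m2 assume m2: "mcoeff p m2 \<noteq> 0 \<and> (\<forall>m'. mcoeff p m' \<noteq> 0 \<longrightarrow> m' = m2 \<or> grevlex_less m' m2)"
  then have "m = m2 \<or> grevlex_less m m2" using assms(1) by blast
  moreover have "m2 = m \<or> grevlex_less m2 m" using assms(2) m2 by blast
  ultimately show "m2 = m" using grevlex_asym by blast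
qed

lemma lead_mon_in: assumes "p \<noteq> 0" shows "mcoeff p (lead_mon p) \<noteq> 0"
proof -
  define S where "S = {m. mcoeff p m \<noteq> 0}"
  have "S \<subseteq> (\<Union>a\<in>{..degree p}. {a} \<times> {..degree (coeff p a)})"
  proof
    fix m assume "m \<in> S"
    then have c: "coeff (coeff p (fst m)) (snd m) \<noteq> 0" by (auto simp: S_def mcoeff_def)
    then have "coeff p (fst m) \<noteq> 0" by auto
    then show "m \<in> (\<Union>a\<in>{..degree p}. {a} \<times> {..degree (coeff p a)})"
      using c by (cases m) (auto intro!: le_degree)
  qed
  then have fin: "finite S" by (rule finite_subset) auto
  obtain a where "coeff p a \<noteq> 0" using assms by (auto simp: poly_eq_iff)
  then obtain b where "coeff (coeff p a) b \<noteq> 0" by (auto simp: poly_eq_iff)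
  then have ne: "(a,b) \<in> S" by (auto simp: S_def mcoeff_def)
  define D where "D = Max ((\<lambda>m. fst m + snd m) ` S)"
  define T where "T = {m\<in>S. fst m + snd m = D}"
  have "D \<in> (\<lambda>m. fst m + snd m) ` S" unfolding D_def using fin ne by (intro Max_in) auto
  then have Tne: "T \<noteq> {}" by (force simp: T_def)
  have Tfin: "finite T" using fin by (auto simp: T_def)
  define B where "B = Min (snd ` T)"
  have "B \<in> snd ` T" unfolding B_def using Tfin Tne by (intro Min_in) auto
  then obtain m0 where m0: "m0 \<in> T" "snd m0 = B" by auto
  have "lead_mon p = m0"
  proof (rule lead_mon_eq)
    show "mcoeff p m0 \<noteq> 0" using m0 by (auto simp: T_def S_def)
    show "\<forall>m'. mcoeff p m' \<noteq> 0 \<longrightarrow> m' = m0 \<or> grevlex_less m' m0"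
    proof (intro allI impI)
      fix m' assume "mcoeff p m' \<noteq> 0"
      then have m'S: "m' \<in> S" by (simp add: S_def)
      then have "fst m' + snd m' \<le> D" unfolding D_def using fin by (intro Max_ge) auto
      moreover have "fst m0 + snd m0 = D" using m0 by (auto simp: T_def)
      moreover have "fst m' + snd m' = D \<Longrightarrow> B \<le> snd m'"
        unfolding B_def using Tfin m'S by (intro Min_le) (auto simp: T_def)
      ultimately show "m' = m0 \<or> grevlex_less m' m0"
        using m0(2) by (cases m'; cases m0) (auto simp: grevlex_less_def)
    qed
  qed
  then show ?thesis using m0 by (auto simp: T_def S_def)
qed

lemma lead_term_eq: "p \<noteq> 0 \<Longrightarrow> lead_term p = mon (fst (lead_mon p)) (snd (lead_mon p)) (mcoeff p (lead_mon p))"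
  by (simp add: lead_term_def mon_def)

lemma init_term_low: "degree g \<le> 2 \<Longrightarrow> init_term g = lead_term g"
  unfolding init_term_def by (subst nf_eq[of g g]) auto

lemma degree_mon_le: "a \<le> 2 \<Longrightarrow> degree (mon a b c) \<le> 2"
  by (simp add: mon_def degree_monom_le le_trans[OF degree_monom_le])

lemma init_term_mon: assumes "a \<le> 2" shows "init_term (mon a b 1) = mon a b 1"
proof -
  have "lead_mon (mon a b 1) = (a,b)"
    by (rule lead_mon_eq) (auto simp: mcoeff_mon)
  moreover have "mon a b 1 \<noteq> 0" by (simp add: mon_def)
  ultimately show ?thesis using assms
    by (simp add: init_term_low degree_mon_le lead_term_eq mcoeff_mon)
qed

lemma init_term_bin: "init_term (mon 2 2 1 + mon 1 3 1) = mon 2 2 1"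
proof -
  let ?g = "mon 2 2 1 + mon 1 3 1"
  have "lead_mon ?g = (2,2)"
    by (rule lead_mon_eq) (auto simp: mcoeff_mon grevlex_less_def)
  moreover have "?g \<noteq> 0" using mcoeff_mon[of 2 2 1 "(2,2)"] mcoeff_mon[of 1 3 1 "(2,2)"]
    by (auto simp: mcoeff_eq_iff intro!: exI[of _ 2])
  moreover have "degree ?g \<le> 2" by (intro degree_add_le degree_mon_le) auto
  ultimately show ?thesis
    by (simp add: init_term_low lead_term_eq mcoeff_mon)
qed


declare One_nat_def[simp del]
lemma Suc0_one[simp]: "Suc 0 = 1" by simp
declare Suc_1[simp]

abbreviation "GG1 \<equiv> {Xv ^ 2, Xv * Yv}"
abbreviation "GG2 \<equiv> {Xv, Yv ^ 2}"
abbreviation "GG \<equiv> {Xv ^ 2, Xv ^ 2 * Yv ^ 2 + Xv * Yv ^ 3, Yv ^ 4, Xv * Yv ^ 3, Yv ^ 6, Xv * Yv ^ 5}"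

lemma mon_forms:
  "Xv ^ 2 = mon 2 0 1" "Xv * Yv = mon 1 1 1" "Yv ^ 2 = mon 0 2 1"
  "Xv ^ 2 * Yv ^ 2 + Xv * Yv ^ 3 = mon 2 2 1 + mon 1 3 1" "Yv ^ 4 = mon 0 4 1"
  "Xv * Yv ^ 3 = mon 1 3 1" "Yv ^ 6 = mon 0 6 1" "Xv * Yv ^ 5 = mon 1 5 1"
  by (simp only: XY_mon[symmetric]; simp)+

lemma mon_X: "Xv = mon 1 0 1"
  by (simp only: XY_mon[symmetric]; simp)

lemma fS_mults:
  "mon 1 0 1 * fS = mon 4 0 1 + mon 2 2 1 + mon 1 3 1"
  "mon 0 1 1 * fS = mon 3 1 1 + mon 1 3 1 + mon 0 4 1"
  "mon 0 3 1 * fS = mon 3 3 1 + mon 1 5 1 + mon 0 6 1"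
  by (simp_all add: fS_mon distrib_left mon_mult)

lemma rs_fS_mult: "rs fS G (q * fS)" by (rule rs_dvd) simp

lemma GG_cases: "g \<in> GG \<Longrightarrow> g = mon 2 0 1 \<or> g = mon 2 2 1 + mon 1 3 1 \<or> g = mon 0 4 1
   \<or> g = mon 1 3 1 \<or> g = mon 0 6 1 \<or> g = mon 1 5 1"
  by (simp only: insert_iff empty_iff mon_forms(4)) (simp only: mon_forms(1,5-8) simp_thms)

lemma G_in_A1: assumes "g \<in> GG" shows "rs fS GG1 g"
proof -
  let ?R = "rs fS GG1"
  have 20: "?R (mon 2 0 1)" unfolding mon_forms(1)[symmetric] by (rule rs_gen) simp
  have 11: "?R (mon 1 1 1)" unfolding mon_forms(2)[symmetric] by (rule rs_gen) simp
  have 40: "?R (mon 4 0 1)" using rs_mult[OF 20 20] by (simp add: mon_mult)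
  have 31: "?R (mon 3 1 1)" using rs_mult[OF 20 11] by (simp add: mon_mult)
  have 22: "?R (mon 2 2 1)" using rs_mult[OF 11 11] by (simp add: mon_mult)
  have 13: "?R (mon 1 3 1)"
    using rs_diff[OF rs_diff[OF rs_fS_mult[of _ "mon 1 0 1"] 40] 22] unfolding fS_mults by (simp add:)
  have 04: "?R (mon 0 4 1)"
    using rs_diff[OF rs_diff[OF rs_fS_mult[of _ "mon 0 1 1"] 31] 13] unfolding fS_mults by (simp add:)
  have 33: "?R (mon 3 3 1)" using rs_mult[OF 22 11] by (simp add: mon_mult)
  have 15: "?R (mon 1 5 1)" using rs_mult[OF 11 04] by (simp add: mon_mult)
  have 06: "?R (mon 0 6 1)"
    using rs_diff[OF rs_diff[OF rs_fS_mult[of _ "mon 0 3 1"] 33] 15] unfolding fS_mults by (simp add:)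
  show ?thesis using GG_cases[OF assms] 20 rs_add[OF 22 13] 04 13 06 15 by auto
qed

lemma G_in_A2: assumes "g \<in> GG" shows "rs fS GG2 g"
proof -
  let ?R = "rs fS GG2"
  have 10: "?R (mon 1 0 1)" unfolding mon_X[symmetric] by (rule rs_gen) simp
  have 02: "?R (mon 0 2 1)" unfolding mon_forms(3)[symmetric] by (rule rs_gen) simp
  have 20: "?R (mon 2 0 1)" using rs_mult[OF 10 10] by (simp add: mon_mult)
  have 40: "?R (mon 4 0 1)" using rs_mult[OF 20 20] by (simp add: mon_mult)
  have 22: "?R (mon 2 2 1)" using rs_mult[OF 20 02] by (simp add: mon_mult)
  have 04: "?R (mon 0 4 1)" using rs_mult[OF 02 02] by (simp add: mon_mult)
  have 06: "?R (mon 0 6 1)" using rs_mult[OF 04 02] by (simp add: mon_mult)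
  have 13: "?R (mon 1 3 1)"
    using rs_diff[OF rs_diff[OF rs_fS_mult[of _ "mon 1 0 1"] 40] 22] unfolding fS_mults by (simp add:)
  have 15: "?R (mon 1 5 1)" using rs_mult[OF 13 02] by (simp add: mon_mult)
  show ?thesis using GG_cases[OF assms] 20 rs_add[OF 22 13] 04 13 06 15 by auto
qed

lemma const_sig: "sig [:[:c:]:] = [:[:c:]:]"
proof -
  have "sig (mon 0 0 c) = mon 0 0 c" using sig_mon[of 0 0 c] by simp
  then show ?thesis by (simp only: const_mon)
qed

lemma inv1: "p \<in> alg_gen GG1 \<Longrightarrow> sig p = p \<and> mcoeff p (0,2) = 0"
proof (induct p rule: alg_gen.induct)
  case (const c) then show ?case using const_sig[of c] by (simp add: const_mon mcoeff_mon)
next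
  case (gen g) then show ?case by (auto simp: mon_forms sig_mon mcoeff_mon)
next
  case (add p q) then show ?case by (simp add: sig_add)
next
  case (mult p q) then show ?case
    using sig_even_coeff[of p 0 1] sig_even_coeff[of q 0 1] by (simp add: sig_mult mcoeff_02)
qed

lemma inv2: "p \<in> alg_gen GG2 \<Longrightarrow> mcoeff p (0,1) = 0 \<and> mcoeff p (1,1) = 0"
proof (induct p rule: alg_gen.induct)
  case (const c) then show ?case by (simp add: const_mon mcoeff_mon)
next
  case (gen g) then show ?case by (auto simp: mon_forms mon_X mcoeff_mon)
next
  case (add p q) then show ?case by simp
next
  case (mult p q) then show ?case using mcoeff_01[of p q] mcoeff_11[of p q] by auto
qed

lemma even_terms:
  assumes "rs m G (mon 2 0 1)" "\<And>a b. even (a + b) \<Longrightarrow> 4 \<le> a + b \<Longrightarrow> rs m G (mon a b 1)"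
    "even (a + b)" "(a,b) \<noteq> (1,1)" "(a,b) \<noteq> (0,2)"
  shows "rs m G (mon a b c)"
proof -
  have e: "mon a b c = [:[:c:]:] * mon a b 1" by (simp add: const_mon mon_mult)
  have "a + b = 0 \<or> (a = 2 \<and> b = 0) \<or> 4 \<le> a + b"
  proof -
    obtain k where "a + b = 2 * k" using assms(3) by (metis evenE)
    moreover have "\<not> (a = 1 \<and> b = 1)" "\<not> (a = 0 \<and> b = 2)" using assms(4,5) by auto
    ultimately show ?thesis by presburger
  qed
  moreover have "rs m G (mon 0 0 c)" using rs_const[of m G c] unfolding const_mon .
  moreover have "rs m G (mon a b c)" if "a = 2" "b = 0"
    unfolding e using that assms(1) by (intro rs_smult) simp
  moreover have "rs m G (mon a b c)" if "4 \<le> a + b"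
    unfolding e using that assms(2,3) by (intro rs_smult) simp
  ultimately show ?thesis by auto
qed

lemma even_in_G: assumes "sig p = p" "mcoeff p (1,1) = 0" "mcoeff p (0,2) = 0" shows "rs fS GG p"
proof -
  let ?R = "rs fS GG"
  have 20: "?R (mon 2 0 1)" unfolding mon_forms(1)[symmetric] by (rule rs_gen) simp
  have b: "?R (mon 2 2 1 + mon 1 3 1)" unfolding mon_forms(4)[symmetric] by (rule rs_gen) simp
  have 13: "?R (mon 1 3 1)" unfolding mon_forms(6)[symmetric] by (rule rs_gen) simp
  have 04: "?R (mon 0 4 1)" unfolding mon_forms(5)[symmetric] by (rule rs_gen) simp
  have 06: "?R (mon 0 6 1)" unfolding mon_forms(7)[symmetric] by (rule rs_gen) simp
  have 15: "?R (mon 1 5 1)" unfolding mon_forms(8)[symmetric] by (rule rs_gen) simp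
  have 22: "?R (mon 2 2 1)" using rs_diff[OF b 13] by (simp add:)
  have 31: "?R (mon 3 1 1)"
    using rs_diff[OF rs_diff[OF rs_fS_mult[of _ "mon 0 1 1"] 13] 04] unfolding fS_mults by (simp add:)
  have ev: "\<And>a b. even (a + b) \<Longrightarrow> 4 \<le> a + b \<Longrightarrow> ?R (mon a b 1)"
    by (rule mono_even[of ?R, OF _ 20 31 22 13 04 15 06]) (rule rs_mult)
  show ?thesis
  proof (rule rs_decomp)
    fix a b assume nz: "mcoeff p (a,b) \<noteq> 0"
    then have "even (a + b)" using sig_even_coeff[OF assms(1)] by blast
    moreover have "(a,b) \<noteq> (1,1)" "(a,b) \<noteq> (0,2)" using nz assms by auto
    ultimately show "?R (mon a b (mcoeff p (a,b)))" by (intro even_terms[OF 20 ev])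
  qed
qed

lemma part1: "(rs fS GG1 h \<and> rs fS GG2 h) \<longleftrightarrow> rs fS GG h"
proof
  assume "rs fS GG h"
  then obtain p where p: "p \<in> alg_gen GG" "fS dvd h - p" by (auto simp: rs_def)
  show "rs fS GG1 h \<and> rs fS GG2 h"
    using rs_trans[OF p(2) alg_gen_sub[OF p(1) G_in_A1]] rs_trans[OF p(2) alg_gen_sub[OF p(1) G_in_A2]]
    by blast
next
  assume "rs fS GG1 h \<and> rs fS GG2 h"
  then obtain p1 p2 where p: "p1 \<in> alg_gen GG1" "fS dvd h - p1" "p2 \<in> alg_gen GG2" "fS dvd h - p2"
    by (auto simp: rs_def)
  have "fS dvd p1 - p2" using dvd_diff[OF p(4) p(2)] by simp
  then have "mcoeff p1 (1,1) = mcoeff p2 (1,1)" using fS_dvd_low[of "p1 - p2" 1 1] by simp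
  then have "mcoeff p1 (1,1) = 0" using inv2[OF p(3)] by simp
  then have "rs fS GG p1" using inv1[OF p(1)] by (intro even_in_G) auto
  then show "rs fS GG h" using rs_trans[OF p(2)] by blast
qed


subsection \<open>Initial algebra\<close>

lemma sig_degree: assumes "degree r \<le> 2" shows "degree (sig r) \<le> 2"
proof -
  have "\<forall>m. mcoeff r m \<noteq> 0 \<longrightarrow> \<not> in_inI m" using assms xdeg2_iff by blast
  then have "\<forall>m. mcoeff (sig r) m \<noteq> 0 \<longrightarrow> \<not> in_inI m" by (simp add: mcoeff_sig')
  then show ?thesis using xdeg2_iff by blast
qed

lemma init_A12:
  assumes "rs fS GG1 a" "rs fS GG2 a"
  shows "rs (Xv ^ 3) (init_term ` GG) (init_term a)"
proof -
  let ?R = "rs (Xv ^ 3) (init_term ` GG)"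
  obtain p1 where p1: "p1 \<in> alg_gen GG1" "fS dvd a - p1" using assms(1) by (auto simp: rs_def)
  obtain p2 where p2: "p2 \<in> alg_gen GG2" "fS dvd a - p2" using assms(2) by (auto simp: rs_def)
  define r where "r = nf a"
  have r: "fS dvd a - r" "degree r \<le> 2" using nf_props[of a] by (auto simp: r_def)
  have d1: "fS dvd p1 - r" using dvd_diff[OF r(1) p1(2)] by simp
  have d2: "fS dvd p2 - r" using dvd_diff[OF r(1) p2(2)] by simp
  have sp1: "sig p1 = p1" "mcoeff p1 (0,2) = 0" using inv1[OF p1(1)] by auto
  have "sig r = r"
  proof -
    obtain k where k: "p1 - r = fS * k" using d1 by (auto elim: dvdE)
    have "p1 - sig r = sig (p1 - r)" by (simp add: sig_diff sp1)
    also have "\<dots> = fS * (- sig k)" by (simp add: k sig_mult sig_fS)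
    finally have "fS dvd p1 - sig r" by simp
    then have "fS dvd (a - p1) + (p1 - sig r)" using p1(2) by (intro dvd_add)
    moreover have "(a - p1) + (p1 - sig r) = a - sig r" by simp
    ultimately have "fS dvd a - sig r" by simp
    then have "nf a = sig r" using sig_degree[OF r(2)] by (rule nf_eq)
    then show ?thesis by (simp add: r_def)
  qed
  have r02: "mcoeff r (0,2) = 0" using fS_dvd_low[OF d1, of 0 2] sp1 by simp
  have r11: "mcoeff r (1,1) = 0" using fS_dvd_low[OF d2, of 1 1] inv2[OF p2(1)] by simp
  have ini: "init_term a = lead_term r" by (simp add: init_term_def r_def)
  have g: "x \<in> GG \<Longrightarrow> ?R (init_term x)" for x by (rule rs_gen) (rule imageI)
  have 20: "?R (mon 2 0 1)"
  proof -
    have "init_term (Xv ^ 2) = mon 2 0 1" by (simp only: mon_forms(1) init_term_mon)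
    then show ?thesis using g[of "Xv ^ 2"] by simp
  qed
  have 22: "?R (mon 2 2 1)"
  proof -
    have "init_term (Xv ^ 2 * Yv ^ 2 + Xv * Yv ^ 3) = mon 2 2 1" by (simp only: mon_forms(4) init_term_bin)
    then show ?thesis using g[of "Xv ^ 2 * Yv ^ 2 + Xv * Yv ^ 3"] by simp
  qed
  have 04: "?R (mon 0 4 1)"
  proof -
    have "init_term (Yv ^ 4) = mon 0 4 1" by (simp only: mon_forms(5)) (rule init_term_mon, simp)
    then show ?thesis using g[of "Yv ^ 4"] by simp
  qed
  have 13: "?R (mon 1 3 1)"
  proof -
    have "init_term (Xv * Yv ^ 3) = mon 1 3 1" by (simp only: mon_forms(6)) (rule init_term_mon, simp)
    then show ?thesis using g[of "Xv * Yv ^ 3"] by simp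
  qed
  have 06: "?R (mon 0 6 1)"
  proof -
    have "init_term (Yv ^ 6) = mon 0 6 1" by (simp only: mon_forms(7)) (rule init_term_mon, simp)
    then show ?thesis using g[of "Yv ^ 6"] by simp
  qed
  have 15: "?R (mon 1 5 1)"
  proof -
    have "init_term (Xv * Yv ^ 5) = mon 1 5 1" by (simp only: mon_forms(8)) (rule init_term_mon, simp)
    then show ?thesis using g[of "Xv * Yv ^ 5"] by simp
  qed
  have 31: "?R (mon 3 1 1)"
  proof (rule rs_dvd)
    have "mon 3 1 1 = Xv ^ 3 * Yv ^ 1" by (simp only: XY_mon)
    then show "Xv ^ 3 dvd mon 3 1 1" by simp
  qed
  have ev: "\<And>a b. even (a + b) \<Longrightarrow> 4 \<le> a + b \<Longrightarrow> ?R (mon a b 1)"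
    by (rule mono_even[of ?R, OF _ 20 31 22 13 04 15 06]) (rule rs_mult)
  show ?thesis
  proof (cases "r = 0")
    case True
    then show ?thesis using rs_zero by (simp add: ini lead_term_def)
  next
    case False
    define m where "m = lead_mon r"
    have nz: "mcoeff r m \<noteq> 0" using lead_mon_in[OF False] by (simp add: m_def)
    obtain x y where m: "m = (x, y)" by (cases m)
    have "even (x + y)" using nz sig_even_coeff[OF \<open>sig r = r\<close>] m by blast
    moreover have "(x,y) \<noteq> (1,1)" "(x,y) \<noteq> (0,2)" using nz m r02 r11 by auto
    ultimately have "?R (mon x y (mcoeff r m))" by (intro even_terms[OF 20 ev])
    then show ?thesis using False by (simp add: ini lead_term_eq m_def[symmetric] m)
  qed
qed

lemma part2:
  "rs (Xv ^ 3) {init_term a | a. rs fS GG1 a \<and> rs fS GG2 a} h \<longleftrightarrow> rs (Xv ^ 3) (init_term ` GG) h"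
proof
  assume "rs (Xv ^ 3) {init_term a | a. rs fS GG1 a \<and> rs fS GG2 a} h"
  then obtain p where p: "p \<in> alg_gen {init_term a | a. rs fS GG1 a \<and> rs fS GG2 a}" "Xv ^ 3 dvd h - p"
    by (auto simp: rs_def)
  have "rs (Xv ^ 3) (init_term ` GG) p"
    apply (rule alg_gen_sub[OF p(1)]) using init_A12 by blast
  then show "rs (Xv ^ 3) (init_term ` GG) h" by (rule rs_trans[OF p(2)])
next
  assume "rs (Xv ^ 3) (init_term ` GG) h"
  then obtain p where p: "p \<in> alg_gen (init_term ` GG)" "Xv ^ 3 dvd h - p" by (auto simp: rs_def)
  have "init_term ` GG \<subseteq> {init_term a | a. rs fS GG1 a \<and> rs fS GG2 a}"
    using G_in_A1 G_in_A2 by blast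
  then have "p \<in> alg_gen {init_term a | a. rs fS GG1 a \<and> rs fS GG2 a}" by (rule alg_gen_mono[OF p(1)])
  then show "rs (Xv ^ 3) {init_term a | a. rs fS GG1 a \<and> rs fS GG2 a} h"
    using p(2) by (auto simp: rs_def)
qed

theorem mainTheorem2:
  defines "G1 \<equiv> {Xv ^ 2, Xv * Yv}"
      and "G2 \<equiv> {Xv, Yv ^ 2}"
      and "G \<equiv> {Xv ^ 2, Xv ^ 2 * Yv ^ 2 + Xv * Yv ^ 3, Yv ^ 4, Xv * Yv ^ 3, Yv ^ 6, Xv * Yv ^ 5}"
  shows "(\<forall>h. (in_subalg_S G1 h \<and> in_subalg_S G2 h) \<longleftrightarrow> in_subalg_S G h)
       \<and> (\<forall>h. in_subalg_R0 {init_term a | a. in_subalg_S G1 a \<and> in_subalg_S G2 a} h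
               \<longleftrightarrow> in_subalg_R0 (init_term ` G) h)"
  unfolding G1_def G2_def G_def in_subalg_S_rs in_subalg_R0_rs
  using part1 part2 by blast

end
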